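(* Up to multiplication by a positive integer, every basic weight of a basic system of type $D$ is one of the following (coordinates $\lambda_k=\langle\lambda,e_k\rangle$): (1) $(D_4,2,2)$: $(1,0,1,0)$, $(0,-1,1,0)$; (2) $(D_5,3,3)$: $(1,0,-1,1,0)$.
   Context: $D_n$ ($n\ge4$) is realized in $\mathbb R^n$ with orthonormal basis $e_1,\dots,e_n$ and standard inner product, simple roots $\alpha_k=e_k-e_{k+1}$ ($k<n$), $\alpha_n=e_{n-1}+e_n$. Let $W$ be the Weyl group, $\alpha^\vee=2\alpha/\langle\alpha,\alpha\rangle$. A weight is integral if $\langle\lambda,\alpha^\vee\rangle\in\mathbb Z$ for all roots $\alpha$; $\overline\lambda$ is the dominant weight in $W\lambda$. For $I=\Delta\setminus\{\alpha_i\}$, $J=\Delta\setminus\{\alpha_j\}$, a basic weight of $(\Phi,i,j)$ is an integral $\lambda$ with $\langle\lambda,\alpha^\vee\rangle\in\mathbb Z_{>0}$ for all $\alpha\in I$ and $\{\alpha\in\Delta:\langle\overline\lambda,\alpha\rangle=0\}=J$; $(\Phi,i,j)$ is a basic system if it has a basic weight. *)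

theory Defs imports Complex_Main begin

text \<open>Root system D_n realised in R^n; vectors are functions nat => real,
  only coordinates 1..n are relevant.\<close>

definition ev :: "nat \<Rightarrow> nat \<Rightarrow> real" where
  "ev k = (\<lambda>t. if t = k then 1 else 0)"

definition ip :: "nat \<Rightarrow> (nat \<Rightarrow> real) \<Rightarrow> (nat \<Rightarrow> real) \<Rightarrow> real" where
  "ip n x y = (\<Sum>k=1..n. x k * y k)"

definition rootsD :: "nat \<Rightarrow> (nat \<Rightarrow> real) set" where
  "rootsD n = {(\<lambda>t. s * ev k t + r * ev l t) | k l s r.
      1 \<le> k \<and> k < l \<and> l \<le> n \<and> s \<in> {1, -1} \<and> r \<in> {1, -1}}"

definition simple_root :: "nat \<Rightarrow> nat \<Rightarrow> nat \<Rightarrow> real" where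
  "simple_root n k = (if k < n then (\<lambda>t. ev k t - ev (k+1) t)
                      else (\<lambda>t. ev (n-1) t + ev n t))"

definition coroot :: "nat \<Rightarrow> (nat \<Rightarrow> real) \<Rightarrow> nat \<Rightarrow> real" where
  "coroot n a = (\<lambda>t. (2 / ip n a a) * a t)"

definition refl :: "nat \<Rightarrow> (nat \<Rightarrow> real) \<Rightarrow> (nat \<Rightarrow> real) \<Rightarrow> nat \<Rightarrow> real" where
  "refl n a x = (\<lambda>t. x t - ip n x (coroot n a) * a t)"

inductive_set weylD :: "nat \<Rightarrow> ((nat \<Rightarrow> real) \<Rightarrow> (nat \<Rightarrow> real)) set" for n where
  weyl_id: "id \<in> weylD n"
| weyl_step: "w \<in> weylD n \<Longrightarrow> a \<in> rootsD n \<Longrightarrow> refl n a \<circ> w \<in> weylD n"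

definition dominant :: "nat \<Rightarrow> (nat \<Rightarrow> real) \<Rightarrow> bool" where
  "dominant n x \<longleftrightarrow> (\<forall>k\<in>{1..n}. ip n x (simple_root n k) \<ge> 0)"

definition dom_conj :: "nat \<Rightarrow> (nat \<Rightarrow> real) \<Rightarrow> nat \<Rightarrow> real" where
  "dom_conj n x = (THE y. y \<in> (\<lambda>w. w x) ` weylD n \<and> dominant n y)"

definition integral_weight :: "nat \<Rightarrow> (nat \<Rightarrow> real) \<Rightarrow> bool" where
  "integral_weight n x \<longleftrightarrow> (\<forall>a\<in>rootsD n. ip n x (coroot n a) \<in> \<int>)"

text \<open>Simple roots indexed by 1..n; I = Delta - {alpha_i}, J = Delta - {alpha_j}.\<close>
definition basic_weight :: "nat \<Rightarrow> nat \<Rightarrow> nat \<Rightarrow> (nat \<Rightarrow> real) \<Rightarrow> bool" where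
  "basic_weight n i j x \<longleftrightarrow> integral_weight n x
     \<and> (\<forall>k\<in>{1..n} - {i}. ip n x (coroot n (simple_root n k)) \<in> \<int>
                          \<and> ip n x (coroot n (simple_root n k)) > 0)
     \<and> {k\<in>{1..n}. ip n (dom_conj n x) (simple_root n k) = 0} = {1..n} - {j}"

definition basic_system :: "nat \<Rightarrow> nat \<Rightarrow> nat \<Rightarrow> bool" where
  "basic_system n i j \<longleftrightarrow> (\<exists>x. basic_weight n i j x)"

end

theory Submission imports Defs begin


definition sw :: "nat \<Rightarrow> nat \<Rightarrow> real \<Rightarrow> (nat \<Rightarrow> real) \<Rightarrow> nat \<Rightarrow> real" where
  "sw k l c z = (\<lambda>t. if t = k then c * z l else if t = l then c * z k else z t)"

definition cnt :: "nat \<Rightarrow> (nat \<Rightarrow> real) \<Rightarrow> real \<Rightarrow> nat" where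
  "cnt n z v = card {k\<in>{1..n}. \<bar>z k\<bar> = v}"

lemma ip_two:
  assumes "1 \<le> k" "k < l" "l \<le> n"
  shows "ip n z (\<lambda>t. s * ev k t + r * ev l t) = s * z k + r * z l"
proof -
  have "ip n z (\<lambda>t. s * ev k t + r * ev l t)
      = (\<Sum>t=1..n. s * (if t = k then z t else 0)) + (\<Sum>t=1..n. r * (if t = l then z t else 0))"
    unfolding ip_def ev_def by (auto simp: sum.distrib[symmetric] algebra_simps intro!: sum.cong)
  also have "\<dots> = s * z k + r * z l"
    using assms by (simp add: sum_distrib_left[symmetric] sum.delta)
  finally show ?thesis .
qed

lemma refl_root:
  assumes "1 \<le> k" "k < l" "l \<le> n" "s \<in> {1,-1}" "r \<in> {1,-1}"
  shows "refl n (\<lambda>t. s * ev k t + r * ev l t) = sw k l (-s*r)"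
proof -
  let ?a = "\<lambda>t. s * ev k t + r * ev l t"
  have aa: "ip n ?a ?a = 2"
    using ip_two[OF assms(1-3), of ?a s r] assms by (auto simp: ev_def)
  have co: "coroot n ?a = ?a" unfolding coroot_def aa by simp
  show ?thesis
    unfolding refl_def co ip_two[OF assms(1-3)] sw_def
    using assms by (auto simp: fun_eq_iff ev_def algebra_simps)
qed

lemma refl_rootsD:
  assumes "a \<in> rootsD n"
  shows "\<exists>k l c. 1 \<le> k \<and> k < l \<and> l \<le> n \<and> (c = 1 \<or> c = -1) \<and> refl n a = sw k l c"
proof -
  obtain k l s r where a: "a = (\<lambda>t. s * ev k t + r * ev l t)" "1 \<le> k" "k < l" "l \<le> n"
    "s \<in> {1,-1}" "r \<in> {1,-1}"
    using assms unfolding rootsD_def by blast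
  have "-s*r = 1 \<or> -s*r = -1" using a by auto
  then show ?thesis using refl_root[OF a(2-6)] a(1-4) by blast
qed

lemma simple_root_lt:
  "k < n \<Longrightarrow> simple_root n k = (\<lambda>t. 1 * ev k t + (-1) * ev (k+1) t)"
  by (simp add: simple_root_def fun_eq_iff)

lemma simple_root_n:
  "simple_root n n = (\<lambda>t. 1 * ev (n-1) t + 1 * ev n t)"
  by (simp add: simple_root_def fun_eq_iff)

lemma root_in:
  "1 \<le> k \<Longrightarrow> k < l \<Longrightarrow> l \<le> n \<Longrightarrow> s \<in> {1,-1} \<Longrightarrow> r \<in> {1,-1} \<Longrightarrow> (\<lambda>t. s * ev k t + r * ev l t) \<in> rootsD n"
  unfolding rootsD_def by blast

lemma simple_root_in:
  assumes "n \<ge> 2" "1 \<le> k" "k \<le> n"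
  shows "simple_root n k \<in> rootsD n"
proof (cases "k < n")
  case True
  then show ?thesis unfolding simple_root_lt[OF True] using assms
    by (intro root_in) auto
next
  case False
  then have "k = n" using assms by auto
  then show ?thesis using assms simple_root_n[of n] root_in[of "n-1" n n 1 1] by simp
qed

lemma ip_simple_lt: "1 \<le> k \<Longrightarrow> k < n \<Longrightarrow> ip n z (simple_root n k) = z k - z (k+1)"
  using ip_two[of k "k+1" n z 1 "-1"] by (simp add: simple_root_lt)

lemma ip_simple_n: "n \<ge> 2 \<Longrightarrow> ip n z (simple_root n n) = z (n-1) + z n"
  using ip_two[of "n-1" n n z 1 1] by (simp add: simple_root_n)

lemma coroot_simple:
  assumes "1 \<le> k" "k \<le> n" "n \<ge> 2"
  shows "coroot n (simple_root n k) = simple_root n k"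
proof -
  have "ip n (simple_root n k) (simple_root n k) = 2"
  proof (cases "k < n")
    case True
    then show ?thesis using assms by (simp add: ip_simple_lt) (simp add: simple_root_lt ev_def)
  next
    case False
    then have "k = n" using assms by auto
    then show ?thesis using assms by (simp add: ip_simple_n) (simp add: simple_root_n ev_def)
  qed
  then show ?thesis unfolding coroot_def by simp
qed

lemma refl_simple_lt: "1 \<le> k \<Longrightarrow> k < n \<Longrightarrow> refl n (simple_root n k) = sw k (k+1) 1"
  using refl_root[of k "k+1" n 1 "-1"] by (simp add: simple_root_lt)

lemma refl_simple_n: "n \<ge> 2 \<Longrightarrow> refl n (simple_root n n) = sw (n-1) n (-1)"
  using refl_root[of "n-1" n n 1 1] by (simp add: simple_root_n)



lemma sw_out: "t \<notin> {1..n} \<Longrightarrow> 1 \<le> k \<Longrightarrow> k < l \<Longrightarrow> l \<le> n \<Longrightarrow> sw k l c z t = z t"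
  by (auto simp: sw_def)

lemma sw_cnt:
  assumes "1 \<le> k" "k < l" "l \<le> n" "c = 1 \<or> c = -1"
  shows "cnt n (sw k l c z) v = cnt n z v"
proof -
  have ac: "\<bar>c\<bar> = 1" using assms(4) by auto
  let ?h = "\<lambda>t::nat. if t = k then l else if t = l then k else t"
  have hh: "?h (?h t) = t" for t by auto
  have hin: "?h t \<in> {1..n}" if "t \<in> {1..n}" for t using that assms(1-3) by auto
  have habs: "\<bar>sw k l c z t\<bar> = \<bar>z (?h t)\<bar>" for t
    unfolding sw_def by (simp add: abs_mult ac)
  have eq: "{t\<in>{1..n}. \<bar>sw k l c z t\<bar> = v} = ?h ` {t\<in>{1..n}. \<bar>z t\<bar> = v}"
  proof (rule set_eqI, rule iffI)
    fix t assume t: "t \<in> {t\<in>{1..n}. \<bar>sw k l c z t\<bar> = v}"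
    then have "?h t \<in> {t\<in>{1..n}. \<bar>z t\<bar> = v}" using hin habs by simp
    from rev_image_eqI[OF this, of t ?h] show "t \<in> ?h ` {t\<in>{1..n}. \<bar>z t\<bar> = v}" using hh[of t] by simp
  next
    fix t assume "t \<in> ?h ` {t\<in>{1..n}. \<bar>z t\<bar> = v}"
    then obtain u where u: "u \<in> {1..n}" "\<bar>z u\<bar> = v" "t = ?h u" by blast
    have ht: "?h t = u" using hh[of u] u(3) by simp
    have "\<bar>sw k l c z t\<bar> = v" unfolding habs[of t] ht using u(2) .
    then show "t \<in> {t\<in>{1..n}. \<bar>sw k l c z t\<bar> = v}" using hin[OF u(1)] u(3) by simp
  qed
  have inj: "inj_on ?h {t\<in>{1..n}. \<bar>z t\<bar> = v}" proof (rule inj_onI)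
    fix a b assume "?h a = ?h b"
    then have "?h (?h a) = ?h (?h b)" by simp
    then show "a = b" unfolding hh .
  qed
  show ?thesis unfolding cnt_def eq using card_image[OF inj] .
qed

lemma sw_prod:
  assumes "1 \<le> k" "k < l" "l \<le> n" "c = 1 \<or> c = -1"
  shows "prod (sw k l c z) {1..n} = prod z {1..n}"
proof -
  have k: "k \<in> {1..n}" and l: "l \<in> {1..n} - {k}" using assms by auto
  have A: "prod f {1..n} = f k * (f l * prod f ({1..n} - {k} - {l}))" for f :: "nat \<Rightarrow> real"
    using prod.remove[OF _ k, of f] prod.remove[of "{1..n} - {k}" l f] l by simp
  have P: "prod (sw k l c z) ({1..n} - {k} - {l}) = prod z ({1..n} - {k} - {l})"
    by (rule prod.cong) (auto simp: sw_def)
  have cc: "c * c = 1" using assms by auto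
  have sk: "sw k l c z k = c * z l" and sl: "sw k l c z l = c * z k" using assms by (auto simp: sw_def)
  have "prod (sw k l c z) {1..n} = c * z l * (c * z k * prod z ({1..n} - {k} - {l}))"
    unfolding A[of "sw k l c z"] sk sl P ..
  also have "\<dots> = (c * c) * (z k * (z l * prod z ({1..n} - {k} - {l})))" by algebra
  also have "\<dots> = prod z {1..n}" unfolding cc A[of z] by simp
  finally show ?thesis .
qed

lemma sw_vals:
  assumes "1 \<le> k" "k < l" "l \<le> n" "c = 1 \<or> c = -1" "t \<in> {1..n}"
    and H: "\<And>t. t \<in> {1..n} \<Longrightarrow> \<exists>s\<in>{1..n}. Z t = z s \<or> Z t = - z s"
  shows "\<exists>s\<in>{1..n}. sw k l c Z t = z s \<or> sw k l c Z t = - z s"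
proof -
  have pm: "\<exists>s\<in>{1..n}. c * Z u = z s \<or> c * Z u = - z s" if uu: "u \<in> {1..n}" for u
  proof -
    obtain s where s: "s \<in> {1..n}" "Z u = z s \<or> Z u = - z s" using H[OF uu] by blast
    have "c * Z u = z s \<or> c * Z u = - z s" using s(2) assms(4) by auto
    then show ?thesis using s(1) by blast
  qed
  show ?thesis
  proof (cases "t = k")
    case True
    then have "sw k l c Z t = c * Z l" by (simp add: sw_def)
    moreover have "l \<in> {1..n}" using assms by simp
    ultimately show ?thesis using pm by presburger
  next
    case F1: False
    show ?thesis
    proof (cases "t = l")
      case True
      then have "sw k l c Z t = c * Z k" using F1 by (simp add: sw_def)
      moreover have "k \<in> {1..n}" using assms by simp
      ultimately show ?thesis using pm by presburger
    next
      case False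
      then have "sw k l c Z t = Z t" using F1 by (simp add: sw_def)
      then show ?thesis using H[OF assms(5)] by presburger
    qed
  qed
qed

lemma weyl_inv:
  assumes "w \<in> weylD n"
  shows "(\<forall>t. t \<notin> {1..n} \<longrightarrow> w z t = z t) \<and> (\<forall>t\<in>{1..n}. \<exists>s\<in>{1..n}. w z t = z s \<or> w z t = - z s)
    \<and> (\<forall>v. cnt n (w z) v = cnt n z v) \<and> prod (w z) {1..n} = prod z {1..n}"
  using assms
proof (induction)
  case weyl_id
  then show ?case by auto
next
  case (weyl_step w a)
  obtain k l c where kl: "1 \<le> k" "k < l" "l \<le> n" "c = 1 \<or> c = -1" "refl n a = sw k l c"
    using refl_rootsD[OF weyl_step(2)] by blast
  have e: "(refl n a \<circ> w) z = sw k l c (w z)" using kl(5) by simp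
  show ?case unfolding e
  proof (intro conjI allI ballI impI)
    fix t assume "t \<notin> {1..n}" then show "sw k l c (w z) t = z t" using weyl_step kl by (simp add: sw_out)
  next
    fix t assume t: "t \<in> {1..n}"
    show "\<exists>s\<in>{1..n}. sw k l c (w z) t = z s \<or> sw k l c (w z) t = - z s"
      by (rule sw_vals[OF kl(1-4) t]) (use weyl_step(3) in blast)
  next
    fix v show "cnt n (sw k l c (w z)) v = cnt n z v" using sw_cnt[OF kl(1-4)] weyl_step by simp
  next
    show "prod (sw k l c (w z)) {1..n} = prod z {1..n}" using sw_prod[OF kl(1-4)] weyl_step by simp
  qed
qed



definition rho :: "nat \<Rightarrow> (nat \<Rightarrow> real) \<Rightarrow> real" where
  "rho n z = (\<Sum>t=1..n. real (n - t) * z t)"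

lemma rho_sw:
  assumes "1 \<le> k" "k < l" "l \<le> n"
  shows "rho n (sw k l c z) = rho n z + real (n - k) * (c * z l - z k) + real (n - l) * (c * z k - z l)"
proof -
  have "sw k l c z t = z t + (if t = k then c * z l - z k else 0) + (if t = l then c * z k - z l else 0)" for t
    using assms by (auto simp: sw_def)
  then have "rho n (sw k l c z) = (\<Sum>t=1..n. real (n - t) * z t + (if t = k then real (n - t) * (c * z l - z k) else 0)
      + (if t = l then real (n - t) * (c * z k - z l) else 0))"
    unfolding rho_def by (intro sum.cong) (auto simp: algebra_simps)
  also have "\<dots> = rho n z + real (n - k) * (c * z l - z k) + real (n - l) * (c * z k - z l)"
    using assms unfolding rho_def by (simp add: sum.distrib sum.delta)
  finally show ?thesis .
qed

lemma orbit_finite: "finite ((\<lambda>w. w x) ` weylD n)"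
proof -
  define V where "V = x ` {1..n} \<union> uminus ` x ` {1..n}"
  have finV: "finite V" unfolding V_def by simp
  let ?F = "{Z. (\<forall>t. t \<notin> {1..n} \<longrightarrow> Z t = x t) \<and> (\<forall>t\<in>{1..n}. Z t \<in> V)}"
  let ?g = "\<lambda>Z t. if t \<in> {1..n} then Z t else (0::real)"
  have sub: "(\<lambda>w. w x) ` weylD n \<subseteq> ?F"
  proof
    fix Z assume "Z \<in> (\<lambda>w. w x) ` weylD n"
    then obtain w where w: "w \<in> weylD n" "Z = w x" by blast
    show "Z \<in> ?F" using weyl_inv[OF w(1), of x] w(2) unfolding V_def by force
  qed
  have "?g ` ?F \<subseteq> {f. \<forall>t. (t \<in> {1..n} \<longrightarrow> f t \<in> V) \<and> (t \<notin> {1..n} \<longrightarrow> f t = 0)}" by auto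
  moreover have "finite {f. \<forall>t. (t \<in> {1..n} \<longrightarrow> f t \<in> V) \<and> (t \<notin> {1..n} \<longrightarrow> f t = 0)}"
    by (rule finite_set_of_finite_funs) (auto simp: finV)
  ultimately have "finite (?g ` ?F)" by (rule finite_subset)
  moreover have "inj_on ?g ?F"
  proof (rule inj_onI)
    fix Z1 Z2 assume "Z1 \<in> ?F" "Z2 \<in> ?F" "?g Z1 = ?g Z2"
    then show "Z1 = Z2" by (auto simp: fun_eq_iff) (metis)
  qed
  ultimately have "finite ?F" by (rule finite_imageD)
  then show ?thesis using sub by (rule finite_subset[rotated])
qed

lemma dominant_exists:
  assumes "n \<ge> 2"
  shows "\<exists>y\<in>(\<lambda>w. w x) ` weylD n. dominant n y"
proof -
  let ?S = "(\<lambda>w. w x) ` weylD n"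
  have fin: "finite (rho n ` ?S)" using orbit_finite by simp
  have ne: "rho n ` ?S \<noteq> {}" using weylD.weyl_id by blast
  have "Max (rho n ` ?S) \<in> rho n ` ?S" by (rule Max_in[OF fin ne])
  then obtain y where ymax0: "Max (rho n ` ?S) = rho n y" and yS: "y \<in> ?S" by (rule imageE)
  have ymax: "rho n y = Max (rho n ` ?S)" using ymax0 by simp
  have ge: "rho n z \<le> rho n y" if "z \<in> ?S" for z using Max_ge[OF fin] that ymax by auto
  obtain w where w: "w \<in> weylD n" "y = w x" using yS by blast
  have "ip n y (simple_root n k) \<ge> 0" if k: "k \<in> {1..n}" for k
  proof (rule ccontr)
    assume neg: "\<not> ip n y (simple_root n k) \<ge> 0"
    have inS: "refl n (simple_root n k) y \<in> ?S"
    proof -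
      have "refl n (simple_root n k) \<circ> w \<in> weylD n"
        using w(1) simple_root_in[OF assms] k by (auto intro: weylD.weyl_step)
      then show ?thesis using w(2) by (metis comp_apply image_eqI)
    qed
    show False
    proof (cases "k < n")
      case True
      have lt: "y k < y (k+1)" using neg ip_simple_lt[of k n y] True k by auto
      have "rho n (refl n (simple_root n k) y) = rho n y + (y (k+1) - y k)"
        using True k rho_sw[of k "k+1" n 1 y] refl_simple_lt[of k n]
        by (simp add: of_nat_diff algebra_simps)
      then show False using ge[OF inS] lt by simp
    next
      case False
      then have kn: "k = n" using k by auto
      have lt: "y (n-1) + y n < 0" using neg ip_simple_n[OF assms, of y] kn by auto
      have "rho n (refl n (simple_root n k) y) = rho n y - (y (n-1) + y n)"
        using kn assms rho_sw[of "n-1" n n "-1" y] refl_simple_n[OF assms]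
        by (simp add: of_nat_diff algebra_simps)
      then show False using ge[OF inS] lt by simp
    qed
  qed
  then show ?thesis using yS unfolding dominant_def by blast
qed

lemma dominant_mono:
  assumes "dominant n y" "n \<ge> 2"
  shows "\<And>k. 1 \<le> k \<Longrightarrow> k < n \<Longrightarrow> y (k+1) \<le> y k" and "y (n-1) + y n \<ge> 0"
proof -
  fix k assume "1 \<le> k" "k < n"
  then show "y (k+1) \<le> y k" using assms(1) ip_simple_lt[of k n y] unfolding dominant_def by force
next
  have "n \<in> {1..n}" using assms by auto
  then have "0 \<le> ip n y (simple_root n n)" using assms(1) unfolding dominant_def by blast
  then show "y (n-1) + y n \<ge> 0" using ip_simple_n[OF assms(2), of y] by simp
qed

lemma chain_mono:
  fixes a b k m :: nat
  assumes "\<And>k. a \<le> k \<Longrightarrow> k < b \<Longrightarrow> (f (k+1) :: real) \<le> f k"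
  shows "a \<le> k \<Longrightarrow> k \<le> m \<Longrightarrow> m \<le> b \<Longrightarrow> f m \<le> f k"
proof (induction m rule: nat_induct)
  case 0 then show ?case by simp
next
  case (Suc m)
  show ?case
  proof (cases "k = Suc m")
    case True then show ?thesis by simp
  next
    case False
    then have "f (Suc m) \<le> f m" using assms[of m] Suc.prems by simp
    then show ?thesis using Suc False by simp
  qed
qed

lemma sorted_cnt_eq:
  fixes a b :: "nat \<Rightarrow> real"
  assumes ma: "\<And>k. 1 \<le> k \<Longrightarrow> k < n \<Longrightarrow> a (k+1) \<le> a k"
    and mb: "\<And>k. 1 \<le> k \<Longrightarrow> k < n \<Longrightarrow> b (k+1) \<le> b k"
    and c: "\<And>v. card {k\<in>{1..n}. a k = v} = card {k\<in>{1..n}. b k = v}"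
    and k: "k \<in> {1..n}"
  shows "a k = b k"
proof (rule ccontr)
  assume "a k \<noteq> b k"
  then have ex: "\<exists>k. k \<in> {1..n} \<and> a k \<noteq> b k" using k by blast
  define k0 where "k0 = (LEAST k. k \<in> {1..n} \<and> a k \<noteq> b k)"
  have k0: "k0 \<in> {1..n}" "a k0 \<noteq> b k0" using LeastI_ex[OF ex] unfolding k0_def by auto
  have below: "a m = b m" if "m \<in> {1..n}" "m < k0" for m
    using not_less_Least[of m "\<lambda>k. k \<in> {1..n} \<and> a k \<noteq> b k"] that unfolding k0_def by auto
  have key: "\<not> (q k0 > p k0)" if mp: "\<And>k. 1 \<le> k \<Longrightarrow> k < n \<Longrightarrow> p (k+1) \<le> p k"
    and mq: "\<And>k. 1 \<le> k \<Longrightarrow> k < n \<Longrightarrow> q (k+1) \<le> q k"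
    and cc: "card {k\<in>{1..n}. p k = q k0} = card {k\<in>{1..n}. q k = q k0}"
    and bl: "\<And>m. m \<in> {1..n} \<Longrightarrow> m < k0 \<Longrightarrow> q m = p m" for p q :: "nat \<Rightarrow> real"
  proof
    assume gt: "q k0 > p k0"
    have sub: "{k\<in>{1..n}. p k = q k0} \<subseteq> {k\<in>{1..n}. q k = q k0} - {k0}"
    proof
      fix m assume m: "m \<in> {k\<in>{1..n}. p k = q k0}"
      have "m < k0"
      proof (rule ccontr)
        assume "\<not> m < k0"
        then have "p m \<le> p k0" using chain_mono[of 1 n p k0 m, OF mp] k0(1) m by auto
        then show False using m gt by auto
      qed
      then show "m \<in> {k\<in>{1..n}. q k = q k0} - {k0}" using m bl by auto
    qed
    have "card {k\<in>{1..n}. p k = q k0} \<le> card ({k\<in>{1..n}. q k = q k0} - {k0})"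
      by (rule card_mono[OF _ sub]) simp
    also have "\<dots> < card {k\<in>{1..n}. q k = q k0}"
      using k0(1) by (intro card_Diff1_less) auto
    finally show False using cc by simp
  qed
  show False
  proof (cases "a k0 < b k0")
    case True
    then show False using key[of a b] ma mb c below by auto
  next
    case False
    then have "b k0 < a k0" using k0 by auto
    moreover have "card {k\<in>{1..n}. b k = a k0} = card {k\<in>{1..n}. a k = a k0}" using c[of "a k0"] by simp
    ultimately show False using key[of b a] ma mb below by force
  qed
qed



lemma dominant_facts:
  assumes "dominant n y" "n \<ge> 2"
  shows "\<And>k. 1 \<le> k \<Longrightarrow> k < n \<Longrightarrow> y k \<ge> 0"
    and "\<And>k. 1 \<le> k \<Longrightarrow> k < n \<Longrightarrow> \<bar>y (k+1)\<bar> \<le> \<bar>y k\<bar>"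
    and "\<And>k. 1 \<le> k \<Longrightarrow> k < n \<Longrightarrow> \<bar>y n\<bar> \<le> y k"
proof -
  note m = dominant_mono[OF assms]
  have "y n \<le> y (n-1)" using m(1)[of "n-1"] assms(2) by simp
  then have n1: "y (n-1) \<ge> \<bar>y n\<bar>" using m(2) by auto
  have ge: "y k \<ge> y (n-1)" if "1 \<le> k" "k < n" for k
    using chain_mono[of 1 n y k "n-1"] m(1) that by auto
  show nn: "y k \<ge> 0" if "1 \<le> k" "k < n" for k using ge[OF that] n1 by auto
  show "\<bar>y n\<bar> \<le> y k" if "1 \<le> k" "k < n" for k using ge[OF that] n1 by auto
  show "\<bar>y (k+1)\<bar> \<le> \<bar>y k\<bar>" if "1 \<le> k" "k < n" for k
  proof (cases "k + 1 < n")
    case True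
    then show ?thesis using nn[of "k+1"] nn[of k] m(1)[of k] that by auto
  next
    case False
    then have "k + 1 = n" using that by auto
    then show ?thesis using n1 nn[of k] that by auto
  qed
qed

lemma dominant_unique:
  assumes n: "n \<ge> 2" and d: "dominant n y" "dominant n y'"
    and c: "\<And>v. cnt n y v = cnt n y' v"
    and p: "prod y {1..n} = prod y' {1..n}"
    and o: "\<And>t. t \<notin> {1..n} \<Longrightarrow> y t = y' t"
  shows "y = y'"
proof -
  note f = dominant_facts[OF d(1) n]
  note f' = dominant_facts[OF d(2) n]
  have ab: "\<bar>y k\<bar> = \<bar>y' k\<bar>" if "k \<in> {1..n}" for k
  proof -
    have cc: "card {k\<in>{1..n}. \<bar>y k\<bar> = v} = card {k\<in>{1..n}. \<bar>y' k\<bar> = v}" for v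
      using c[of v] unfolding cnt_def .
    show ?thesis using sorted_cnt_eq[of n "\<lambda>k. \<bar>y k\<bar>" "\<lambda>k. \<bar>y' k\<bar>", OF f(2) f'(2) cc that] by simp
  qed
  have lt: "y k = y' k" if "1 \<le> k" "k < n" for k
    using ab[of k] f(1)[OF that] f'(1)[OF that] that by auto
  have nn: "y n = y' n"
  proof (rule ccontr)
    assume ne: "y n \<noteq> y' n"
    have P1: "prod y {1..n-1} = prod y' {1..n-1}" by (rule prod.cong) (use lt in auto)
    obtain q where q: "n = Suc q" using n by (cases n) auto
    have PS: "prod f {1..n} = prod f {1..n-1} * f n" for f :: "nat \<Rightarrow> real"
      unfolding q by simp
    have "prod y {1..n-1} * y n = prod y {1..n-1} * y' n" using p PS[of y] PS[of y'] P1 by simp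
    then have "prod y {1..n-1} = 0" using ne by simp
    then obtain k where k: "k \<in> {1..n-1}" "y k = 0" by auto
    then have "y n = 0" using f(3)[of k] by auto
    moreover have "y' n = 0" using f'(3)[of k] k lt[of k] by auto
    ultimately show False using ne by simp
  qed
  show ?thesis
  proof
    fix t show "y t = y' t"
      using o[of t] lt[of t] nn by (cases "t \<in> {1..n}") (auto simp: le_less)
  qed
qed

lemma dom_conj_props:
  assumes n: "n \<ge> 2"
  shows "dom_conj n x \<in> (\<lambda>w. w x) ` weylD n \<and> dominant n (dom_conj n x)"
proof -
  have "\<exists>!y. y \<in> (\<lambda>w. w x) ` weylD n \<and> dominant n y"
  proof (rule ex_ex1I)
    show "\<exists>y. y \<in> (\<lambda>w. w x) ` weylD n \<and> dominant n y" using dominant_exists[OF n] by blast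
  next
    fix y y' assume y: "y \<in> (\<lambda>w. w x) ` weylD n \<and> dominant n y" and y': "y' \<in> (\<lambda>w. w x) ` weylD n \<and> dominant n y'"
    obtain w where w: "w \<in> weylD n" "y = w x" using y by blast
    obtain w' where w': "w' \<in> weylD n" "y' = w' x" using y' by blast
    note i = weyl_inv[OF w(1), of x] and i' = weyl_inv[OF w'(1), of x]
    show "y = y'"
      by (rule dominant_unique[OF n]) (use y y' w w' i i' in auto)
  qed
  then show ?thesis unfolding dom_conj_def by (rule theI')
qed



lemma eq_chain:
  fixes a b k :: nat and f :: "nat \<Rightarrow> real"
  assumes "\<And>k. a \<le> k \<Longrightarrow> k < b \<Longrightarrow> f (k+1) = f k"
  shows "a \<le> k \<Longrightarrow> k \<le> b \<Longrightarrow> f k = f a"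
proof (induction k)
  case 0 then show ?case by simp
next
  case (Suc k)
  show ?case
  proof (cases "a = Suc k")
    case True then show ?thesis by simp
  next
    case False
    then show ?thesis using Suc assms[of k] by simp
  qed
qed

lemma y_shape:
  assumes n: "n \<ge> 4" and d: "dominant n y" and j: "j \<in> {1..n}"
    and J: "\<And>k. k \<in> {1..n} \<Longrightarrow> (ip n y (simple_root n k) = 0 \<longleftrightarrow> k \<noteq> j)"
  shows "y 1 > 0 \<and> ((j \<le> n - 2 \<and> (\<forall>k\<in>{1..n}. (k \<le> j \<longrightarrow> y k = y 1) \<and> (j < k \<longrightarrow> y k = 0)))
          \<or> (j \<ge> n - 1 \<and> (\<forall>k\<in>{1..n}. \<bar>y k\<bar> = y 1)))"
proof -
  have n2: "n \<ge> 2" using n by simp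
  have Jl: "(y k - y (k+1) = 0) \<longleftrightarrow> k \<noteq> j" if "1 \<le> k" "k < n" for k
    using J[of k] that ip_simple_lt[OF that, of y] by auto
  have Jn: "(y (n-1) + y n = 0) \<longleftrightarrow> n \<noteq> j" using J[of n] n ip_simple_n[OF n2, of y] by auto
  note m = dominant_mono[OF d n2]
  have step: "y (k+1) = y k" if "1 \<le> k" "k < n" "k \<noteq> j" for k
  proof -
    have "y k - y (k+1) = 0" using Jl[OF that(1,2)] that(3) by simp
    then show ?thesis by simp
  qed
  consider "j \<le> n - 2" | "j = n - 1" | "j = n" using j by fastforce
  then show ?thesis
  proof cases
    case 1
    have s1: "y (k+1) = y k" if "1 \<le> k" "k < j" for k using step that 1 n by simp
    have a: "y k = y 1" if "1 \<le> k" "k \<le> j" for k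
      using eq_chain[of 1 j y, OF s1 that] by simp
    have s2: "y (k+1) = y k" if "j+1 \<le> k" "k < n" for k using step that by simp
    have b: "y k = y (j+1)" if "j+1 \<le> k" "k \<le> n" for k
      using eq_chain[of "j+1" n y, OF s2 that] by simp
    have "y (n-1) = y n" using Jl[of "n-1"] 1 n j by auto
    moreover have "y (n-1) + y n = 0" using Jn 1 n by auto
    ultimately have "y n = 0" by simp
    then have yj1: "y (j+1) = 0" using b[of n] 1 n by auto
    have "y j - y (j+1) \<noteq> 0" using Jl[of j] j 1 n by auto
    moreover have "y (j+1) \<le> y j" using m(1)[of j] j 1 n by auto
    ultimately have "y j > 0" using yj1 by auto
    then have "y 1 > 0" using a[of j] j by auto
    moreover have "\<forall>k\<in>{1..n}. (k \<le> j \<longrightarrow> y k = y 1) \<and> (j < k \<longrightarrow> y k = 0)"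
    proof (intro ballI conjI impI)
      fix k assume k: "k \<in> {1..n}" "k \<le> j"
      show "y k = y 1" by (rule a) (use k in auto)
    next
      fix k assume k: "k \<in> {1..n}" "j < k"
      have "y k = y (j+1)" by (rule b) (use k in auto)
      then show "y k = 0" using yj1 by simp
    qed
    ultimately show ?thesis using 1 by blast
  next
    case 2
    have s1: "y (k+1) = y k" if "1 \<le> k" "k < n-1" for k using step that 2 by simp
    have a: "y k = y 1" if "1 \<le> k" "k \<le> n-1" for k
      using eq_chain[of 1 "n-1" y, OF s1 that] by simp
    have "y n = - y (n-1)" using Jn 2 n by auto
    moreover have "y (n-1) - y n \<noteq> 0" using Jl[of "n-1"] 2 n by auto
    moreover have "y n \<le> y (n-1)" using m(1)[of "n-1"] n by auto
    ultimately have pos: "y (n-1) > 0" by auto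
    then have "y 1 > 0" using a[of "n-1"] n by auto
    moreover have "\<bar>y k\<bar> = y 1" if "k \<in> {1..n}" for k
    proof (cases "k = n")
      case True then show ?thesis using \<open>y n = - y (n-1)\<close> a[of "n-1"] n pos by auto
    next
      case False then show ?thesis using a[of k] that \<open>y 1 > 0\<close> by auto
    qed
    moreover have "n - 1 \<le> j" using 2 by simp
    ultimately show ?thesis by blast
  next
    case 3
    have s1: "y (k+1) = y k" if "1 \<le> k" "k < n" for k using step that 3 by simp
    have a: "y k = y 1" if "1 \<le> k" "k \<le> n" for k
      using eq_chain[of 1 n y, OF s1 that] by simp
    have "y (n-1) + y n \<noteq> 0" using Jn 3 by auto
    then have "y 1 > 0" using m(2) a[of n] a[of "n-1"] n by auto
    moreover have "\<bar>y k\<bar> = y 1" if "k \<in> {1..n}" for k using a[of k] that \<open>y 1 > 0\<close> by auto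
    moreover have "n - 1 \<le> j" using 3 by simp
    ultimately show ?thesis by blast
  qed
qed



lemma gap3:
  fixes a b c :: real
  assumes "a = 0 \<or> a = c \<or> a = - c" "b = 0 \<or> b = c \<or> b = - c" "b < a" "c > 0"
  shows "a - b \<ge> c"
  using assms by auto

lemma bnd3:
  fixes a c :: real
  assumes "a = 0 \<or> a = c \<or> a = - c" "c > 0"
  shows "a \<le> c" "a \<ge> - c"
  using assms by auto

theorem theorem5p10:
  fixes n i j :: nat and x :: "nat \<Rightarrow> real"
  assumes "n \<ge> 4" and "i \<in> {1..n}" and "j \<in> {1..n}"
    and "basic_system n i j"
    and "basic_weight n i j x"
  shows "\<exists>m::nat. m > 0 \<and>
    ((n = 4 \<and> i = 2 \<and> j = 2 \<and>
       ((\<forall>k\<in>{1..n}. x k = real m * [1, 0, 1, 0] ! (k - 1)) \<or>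
        (\<forall>k\<in>{1..n}. x k = real m * [0, -1, 1, 0] ! (k - 1))))
    \<or> (n = 5 \<and> i = 3 \<and> j = 3 \<and>
       (\<forall>k\<in>{1..n}. x k = real m * [1, 0, -1, 1, 0] ! (k - 1))))"
proof -
  have n4: "n \<ge> 4" and i: "i \<in> {1..n}" and j: "j \<in> {1..n}" using assms by auto
  have n2: "n \<ge> 2" using n4 by simp
  define y where "y = dom_conj n x"
  have yprops: "y \<in> (\<lambda>w. w x) ` weylD n" "dominant n y" using dom_conj_props[OF n2, of x] y_def by auto
  obtain w where w: "w \<in> weylD n" "y = w x" using yprops(1) by blast
  have cy: "cnt n y v = cnt n x v" for v using weyl_inv[OF w(1), of x] w(2) by auto
  have BW1: "\<forall>k\<in>{1..n} - {i}. ip n x (coroot n (simple_root n k)) \<in> \<int> \<and> ip n x (coroot n (simple_root n k)) > 0"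
    and BW2: "{k\<in>{1..n}. ip n y (simple_root n k) = 0} = {1..n} - {j}"
    using assms(5) unfolding basic_weight_def y_def by auto
  have cx: "x (k+1) < x k \<and> x k - x (k+1) \<in> \<int>" if "1 \<le> k" "k < n" "k \<noteq> i" for k
  proof -
    have "k \<in> {1..n} - {i}" using that by auto
    then have "ip n x (coroot n (simple_root n k)) \<in> \<int> \<and> ip n x (coroot n (simple_root n k)) > 0"
      using BW1 by blast
    moreover have "coroot n (simple_root n k) = simple_root n k" using coroot_simple[of k n] that n2 by simp
    moreover have "ip n x (simple_root n k) = x k - x (k+1)" using ip_simple_lt[of k n x] that by simp
    ultimately show ?thesis by simp
  qed
  have cxn: "x (n-1) + x n > 0" if "i \<noteq> n"
  proof -
    have "n \<in> {1..n} - {i}" using that n2 by auto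
    then have "ip n x (coroot n (simple_root n n)) > 0"
      using BW1 by blast
    moreover have "coroot n (simple_root n n) = simple_root n n" using coroot_simple[of n n] n2 by simp
    ultimately show ?thesis using ip_simple_n[OF n2, of x] by simp
  qed
  have J: "(ip n y (simple_root n k) = 0 \<longleftrightarrow> k \<noteq> j)" if "k \<in> {1..n}" for k
    using BW2 that by blast
  define c where "c = y 1"
  have shape: "c > 0 \<and> ((j \<le> n - 2 \<and> (\<forall>k\<in>{1..n}. (k \<le> j \<longrightarrow> y k = c) \<and> (j < k \<longrightarrow> y k = 0)))
          \<or> (j \<ge> n - 1 \<and> (\<forall>k\<in>{1..n}. \<bar>y k\<bar> = c)))"
    using y_shape[OF n4 yprops(2) j J] unfolding c_def by blast
  have c0: "c > 0" using shape by blast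
  have exy: "\<exists>m\<in>{1..n}. \<bar>y m\<bar> = \<bar>x k\<bar>" if "k \<in> {1..n}" for k
  proof -
    have "cnt n x \<bar>x k\<bar> > 0" unfolding cnt_def using that by (subst card_gt_0_iff) auto
    then have "cnt n y \<bar>x k\<bar> > 0" using cy by simp
    then have "{m\<in>{1..n}. \<bar>y m\<bar> = \<bar>x k\<bar>} \<noteq> {}" unfolding cnt_def by (metis card.empty less_irrefl)
    then show ?thesis by blast
  qed
  have vals: "x k = 0 \<or> x k = c \<or> x k = - c" if kk: "k \<in> {1..n}" for k
  proof -
    obtain m where m: "m \<in> {1..n}" "\<bar>y m\<bar> = \<bar>x k\<bar>" using exy[OF kk] by blast
    have "\<bar>y m\<bar> = 0 \<or> \<bar>y m\<bar> = c" using shape m(1) c0 by (cases "m \<le> j") auto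
    then show ?thesis using m(2) by (auto simp: abs_if split: if_splits)
  qed
  have zc: "j \<le> n - 2 \<and> cnt n x c = j" if kk: "k \<in> {1..n}" "x k = 0" for k
  proof -
    obtain m where m: "m \<in> {1..n}" "y m = 0" using exy[OF kk(1)] kk(2) by auto
    have nall: "\<not> (\<forall>k\<in>{1..n}. \<bar>y k\<bar> = c)"
    proof
      assume "\<forall>k\<in>{1..n}. \<bar>y k\<bar> = c"
      then have "\<bar>y m\<bar> = c" using m(1) by blast
      then show False using m(2) c0 by simp
    qed
    have A: "j \<le> n - 2 \<and> (\<forall>k\<in>{1..n}. (k \<le> j \<longrightarrow> y k = c) \<and> (j < k \<longrightarrow> y k = 0))"
      using shape nall by blast
    then have sh1: "j \<le> n - 2" and sh2: "\<And>k. k \<in> {1..n} \<Longrightarrow> (k \<le> j \<longrightarrow> y k = c) \<and> (j < k \<longrightarrow> y k = 0)"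
      by blast+
    have "{k\<in>{1..n}. \<bar>y k\<bar> = c} = {1..j}"
    proof (rule set_eqI, rule iffI)
      fix k assume k: "k \<in> {k\<in>{1..n}. \<bar>y k\<bar> = c}"
      then have k1: "k \<in> {1..n}" "\<bar>y k\<bar> = c" by auto
      have "k \<le> j"
      proof (rule ccontr)
        assume "\<not> k \<le> j"
        then have "y k = 0" using sh2[OF k1(1)] by simp
        then show False using k1(2) c0 by simp
      qed
      then show "k \<in> {1..j}" using k1 by simp
    next
      fix k assume k: "k \<in> {1..j}"
      then have k1: "k \<in> {1..n}" using j by auto
      have "y k = c" using sh2[OF k1] k by simp
      then show "k \<in> {k\<in>{1..n}. \<bar>y k\<bar> = c}" using k1 c0 by simp
    qed
    then have "cnt n y c = j" unfolding cnt_def by simp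
    then show ?thesis using cy sh1 by simp
  qed
  have four: False if "1 \<le> m" "m + 3 \<le> n" "m \<noteq> i" "m+1 \<noteq> i" "m+2 \<noteq> i" for m
  proof -
    have l: "x (m+1) < x m" "x (m+2) < x (m+1)" "x (m+3) < x (m+2)"
      using cx[of m] cx[of "m+1"] cx[of "m+2"] that by (auto simp: add.assoc numeral_3_eq_3)
    have v: "x m = 0 \<or> x m = c \<or> x m = - c" "x (m+1) = 0 \<or> x (m+1) = c \<or> x (m+1) = - c"
      "x (m+2) = 0 \<or> x (m+2) = c \<or> x (m+2) = - c" "x (m+3) = 0 \<or> x (m+3) = c \<or> x (m+3) = - c"
      using vals[of m] vals[of "m+1"] vals[of "m+2"] vals[of "m+3"] that by simp_all
    have "x m - x (m+1) \<ge> c" "x (m+1) - x (m+2) \<ge> c" "x (m+2) - x (m+3) \<ge> c"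
      "x m \<le> c" "x (m+3) \<ge> - c"
      using gap3[OF v(1) v(2) l(1) c0] gap3[OF v(2) v(3) l(2) c0] gap3[OF v(3) v(4) l(3) c0]
        bnd3[OF v(1) c0] bnd3[OF v(4) c0] by simp_all
    then show False using c0 by linarith
  qed
  have inn: "i \<noteq> n"
  proof
    assume "i = n"
    then have "1 \<le> (1::nat)" "1 + 3 \<le> n" "1 \<noteq> i" "1 + 1 \<noteq> i" "1 + 2 \<noteq> i" using n4 by auto
    then show False by (rule four)
  qed
  have in1: "i \<noteq> n - 1"
  proof
    assume ii: "i = n - 1"
    show False
    proof (cases "n = 4")
      case True
      have l: "x 2 < x 1" "x 3 < x 2" using cx[of 1] cx[of 2] ii True by (auto simp: numeral_2_eq_2 numeral_3_eq_3)
      have s: "x 3 + x 4 > 0" using cxn inn True by auto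
      have v: "x 1 = 0 \<or> x 1 = c \<or> x 1 = - c" "x 2 = 0 \<or> x 2 = c \<or> x 2 = - c"
        "x 3 = 0 \<or> x 3 = c \<or> x 3 = - c" "x 4 = 0 \<or> x 4 = c \<or> x 4 = - c"
        using vals[of 1] vals[of 2] vals[of 3] vals[of 4] True by simp_all
      have "x 1 - x 2 \<ge> c" "x 2 - x 3 \<ge> c" "x 1 \<le> c" "x 4 \<le> c" "x 3 + x 4 > 0"
        using gap3[OF v(1) v(2) l(1) c0] gap3[OF v(2) v(3) l(2) c0] bnd3[OF v(1) c0] bnd3[OF v(4) c0] s
        by simp_all
      then show False using c0 by linarith
    next
      case False
      then have "1 \<le> (1::nat)" "1 + 3 \<le> n" "1 \<noteq> i" "1 + 1 \<noteq> i" "1 + 2 \<noteq> i" using n4 ii by auto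
      then show False by (rule four)
    qed
  qed
  have a1: "x n < x (n-1)" using cx[of "n-1"] in1 n4 by auto
  have a2: "x (n-1) + x n > 0" using cxn inn by auto
  have vn: "x n = 0 \<or> x n = c \<or> x n = - c" "x (n-1) = 0 \<or> x (n-1) = c \<or> x (n-1) = - c"
    using vals[of n] vals[of "n-1"] n4 by simp_all
  have xn: "x n = 0" "x (n-1) = c" using a1 a2 vn c0 by auto
  have in2: "i = n - 2"
  proof (rule ccontr)
    assume "i \<noteq> n - 2"
    then have l: "x (n-1) < x (n-2)" using cx[of "n-2"] n4 by (auto simp: numeral_2_eq_2 Suc_diff_Suc)
    have v: "x (n-2) = 0 \<or> x (n-2) = c \<or> x (n-2) = - c" using vals[of "n-2"] n4 by simp
    have "x (n-2) - x (n-1) \<ge> c" "x (n-2) \<le> c" using gap3[OF v vn(2) l c0] bnd3[OF v c0] by simp_all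
    then show False using xn c0 by linarith
  qed
  have n45: "n = 4 \<or> n = 5"
  proof (rule ccontr)
    assume "\<not> (n = 4 \<or> n = 5)"
    then have "1 \<le> (1::nat)" "1 + 3 \<le> n" "1 \<noteq> i" "1 + 1 \<noteq> i" "1 + 2 \<noteq> i" using n4 in2 by auto
    then show False by (rule four)
  qed
  have zz: "j \<le> n - 2" "cnt n x c = j" using zc[of n] xn n4 by auto
  have cint: "c \<in> \<int>" using cx[of "n-1"] in1 in2 n4 xn by auto
  then obtain z :: int where z: "c = of_int z" by (auto elim: Ints_cases)
  define m where "m = nat z"
  have cm: "c = real m" "m > 0" using z c0 unfolding m_def by auto
  show ?thesis
  proof (cases "n = 4")
    case True
    have I: "i = 2" using in2 True by simp
    have x34: "x 3 = c" "x 4 = 0" using xn True by auto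
    have x12: "x 2 < x 1" using cx[of 1] I True by (auto simp: numeral_2_eq_2)
    have v12: "x 1 = 0 \<or> x 1 = c \<or> x 1 = - c" "x 2 = 0 \<or> x 2 = c \<or> x 2 = - c" using vals True by auto
    have s4: "{1..4::nat} = {1,2,3,4}" by auto
    have jc: "card {k\<in>{1..4}. \<bar>x k\<bar> = c} = j" using zz True unfolding cnt_def by simp
    have "j \<le> 2" using zz True by simp
    consider "x 1 = c" "x 2 = 0" | "x 1 = 0" "x 2 = - c" | "x 1 = c" "x 2 = - c" using x12 v12 c0 by auto
    then show ?thesis
    proof cases
      case 1
      have "{k\<in>{1..4::nat}. \<bar>x k\<bar> = c} = {1,3}" unfolding s4 using 1 x34 c0 by auto
      then have j2: "j = 2" using jc by simp
      have "\<forall>k\<in>{1..n}. x k = real m * [1, 0, 1, 0] ! (k - 1)"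
        unfolding True s4 using 1 x34 cm by auto
      then show ?thesis using cm True I j2 by blast
    next
      case 2
      have "{k\<in>{1..4::nat}. \<bar>x k\<bar> = c} = {2,3}" unfolding s4 using 2 x34 c0 by auto
      then have j2: "j = 2" using jc by simp
      have "\<forall>k\<in>{1..n}. x k = real m * [0, -1, 1, 0] ! (k - 1)"
        unfolding True s4 using 2 x34 cm by auto
      then show ?thesis using cm True I j2 by blast
    next
      case 3
      have "{k\<in>{1..4::nat}. \<bar>x k\<bar> = c} = {1,2,3}" unfolding s4 using 3 x34 c0 by auto
      then have "j = 3" using jc by simp
      then show ?thesis using \<open>j \<le> 2\<close> by simp
    qed
  next
    case False
    then have T: "n = 5" using n45 by simp
    have I: "i = 3" using in2 T by simp
    have x45: "x 4 = c" "x 5 = 0" using xn T by auto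
    have x12: "x 2 < x 1" "x 3 < x 2" using cx[of 1] cx[of 2] I T by (auto simp: numeral_2_eq_2 numeral_3_eq_3)
    have v: "x 1 = 0 \<or> x 1 = c \<or> x 1 = - c" "x 2 = 0 \<or> x 2 = c \<or> x 2 = - c"
      "x 3 = 0 \<or> x 3 = c \<or> x 3 = - c" using vals T by auto
    have x123: "x 1 = c" "x 2 = 0" "x 3 = - c" using x12 v c0 by auto
    have s5: "{1..5::nat} = {1,2,3,4,5}" by auto
    have jc: "card {k\<in>{1..5}. \<bar>x k\<bar> = c} = j" using zz T unfolding cnt_def by simp
    have "{k\<in>{1..5::nat}. \<bar>x k\<bar> = c} = {1,3,4}" unfolding s5 using x123 x45 c0 by auto
    then have j3: "j = 3" using jc by simp
    have "\<forall>k\<in>{1..n}. x k = real m * [1, 0, -1, 1, 0] ! (k - 1)"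
      unfolding T s5 using x123 x45 cm by auto
    then show ?thesis using cm T I j3 by blast
  qed
qed

end
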